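(* Let $H$ be a complex separable Hilbert space and $S,T,X\in B(H)$. If the pair $(S,T)$ satisfies the Fuglede–Putnam property $(FP)_{B(H)}$ and $C\in B(H)$ belongs to $\ker(\delta_{S,T})$, then $$\|\delta_{S,T}X+C\|\ge\|C\|.$$
   Context: For $S,T\in B(H)$, the generalized derivation $\delta_{S,T}:B(H)\to B(H)$ is $\delta_{S,T}X=SX-XT$; thus $C\in\ker(\delta_{S,T})$ means $SC=CT$. The pair $(S,T)$ satisfies $(FP)_{B(H)}$ if for every $C\in B(H)$, $SC=CT$ implies $S^*C=CT^*$. $\|\cdot\|$ is the operator norm. *)

theory Defs
  imports "HOL-Analysis.Analysis"
begin

class complex_vector = real_vector +
  fixes scaleC :: "complex \<Rightarrow> 'a \<Rightarrow> 'a"  (infixr \<open>*\<^sub>C\<close> 75)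
  assumes scaleC_add_right: "a *\<^sub>C (x + y) = a *\<^sub>C x + a *\<^sub>C y"
    and scaleC_add_left: "(a + b) *\<^sub>C x = a *\<^sub>C x + b *\<^sub>C x"
    and scaleC_scaleC: "a *\<^sub>C (b *\<^sub>C x) = (a * b) *\<^sub>C x"
    and scaleC_one: "1 *\<^sub>C x = x"
    and scaleR_scaleC: "r *\<^sub>R x = complex_of_real r *\<^sub>C x"

class complex_hilbert = complex_vector + banach +
  fixes cinner :: "'a \<Rightarrow> 'a \<Rightarrow> complex"
  assumes cinner_commute: "cinner x y = cnj (cinner y x)"
    and cinner_add_left: "cinner (x + y) z = cinner x z + cinner y z"
    and cinner_scaleC_left: "cinner (c *\<^sub>C x) y = c * cinner x y"
    and cinner_ge_zero: "0 \<le> Re (cinner x x)"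
    and cinner_eq_zero_iff: "cinner x x = 0 \<longleftrightarrow> x = 0"
    and norm_eq_sqrt_cinner: "norm x = sqrt (Re (cinner x x))"

text \<open>Non-vacuity: the complex numbers form a complex Hilbert space.\<close>
instantiation complex :: complex_hilbert
begin
definition scaleC_complex :: "complex \<Rightarrow> complex \<Rightarrow> complex" where
  "scaleC_complex a x = a * x"
definition cinner_complex :: "complex \<Rightarrow> complex \<Rightarrow> complex" where
  "cinner_complex x y = x * cnj y"
instance
  by standard (auto simp: scaleC_complex_def cinner_complex_def algebra_simps
      scaleR_conv_of_real complex_mult_cnj cmod_def complex_eq_iff)
end

definition separable_H :: "'a::topological_space itself \<Rightarrow> bool" where
  "separable_H _ \<longleftrightarrow> (\<exists>D::'a set. countable D \<and> closure D = UNIV)"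

definition bounded_clinear :: "('a::complex_hilbert \<Rightarrow> 'b::complex_hilbert) \<Rightarrow> bool" where
  "bounded_clinear f \<longleftrightarrow>
     (\<forall>x y. f (x + y) = f x + f y) \<and> (\<forall>c x. f (c *\<^sub>C x) = c *\<^sub>C f x) \<and>
     (\<exists>K. \<forall>x. norm (f x) \<le> norm x * K)"

definition adj :: "('a::complex_hilbert \<Rightarrow> 'a) \<Rightarrow> ('a \<Rightarrow> 'a)" where
  "adj S = (THE A. \<forall>x y. cinner (S x) y = cinner x (A y))"

definition gen_deriv :: "('a::complex_hilbert \<Rightarrow> 'a) \<Rightarrow> ('a \<Rightarrow> 'a) \<Rightarrow> ('a \<Rightarrow> 'a) \<Rightarrow> ('a \<Rightarrow> 'a)" where
  "gen_deriv S T X = (\<lambda>x. S (X x) - X (T x))"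

definition FP_BH :: "('a::complex_hilbert \<Rightarrow> 'a) \<Rightarrow> ('a \<Rightarrow> 'a) \<Rightarrow> bool" where
  "FP_BH S T \<longleftrightarrow> (\<forall>C. bounded_clinear C \<longrightarrow> S \<circ> C = C \<circ> T \<longrightarrow> adj S \<circ> C = C \<circ> adj T)"

end

theory Submission
  imports Defs
begin

declare scaleC_one[simp]

lemma scaleC_zero_left[simp]: "0 *\<^sub>C x = 0"
  using scaleR_scaleC[of 0 x, symmetric] by simp
lemma scaleC_minus1: "(-1) *\<^sub>C x = - x"
  using scaleR_scaleC[of "-1" x, symmetric] by simp
lemma scaleC_zero_right[simp]: "a *\<^sub>C 0 = 0"
  using scaleC_add_right[of a 0 0] by simp
lemma scaleC_minus_right: "a *\<^sub>C (- x) = - (a *\<^sub>C x)"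
proof -
  have "a *\<^sub>C (- x) = a *\<^sub>C ((-1) *\<^sub>C x)" by (simp add: scaleC_minus1)
  also have "\<dots> = (-1) *\<^sub>C (a *\<^sub>C x)" by (simp add: scaleC_scaleC)
  finally show ?thesis by (simp add: scaleC_minus1)
qed
lemma scaleC_minus_left: "(- a) *\<^sub>C x = - (a *\<^sub>C x)"
proof -
  have "(- a) *\<^sub>C x = (-1) *\<^sub>C (a *\<^sub>C x)" by (simp add: scaleC_scaleC)
  then show ?thesis by (simp add: scaleC_minus1)
qed
lemma scaleC_diff_right: "a *\<^sub>C (x - y) = a *\<^sub>C x - a *\<^sub>C y"
  unfolding diff_conv_add_uminus by (simp only: scaleC_add_right scaleC_minus_right)
lemma scaleC_diff_left: "(a - b) *\<^sub>C x = a *\<^sub>C x - b *\<^sub>C x"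
  unfolding diff_conv_add_uminus by (simp only: scaleC_add_left scaleC_minus_left)

lemma cinner_add_right: "cinner x (y + z) = cinner x y + cinner x z"
proof -
  have "cinner x (y + z) = cnj (cinner (y + z) x)" by (rule cinner_commute)
  also have "\<dots> = cnj (cinner y x) + cnj (cinner z x)" by (simp add: cinner_add_left)
  finally show ?thesis by (simp add: cinner_commute[of x y] cinner_commute[of x z])
qed
lemma cinner_scaleC_right: "cinner x (c *\<^sub>C y) = cnj c * cinner x y"
proof -
  have "cinner x (c *\<^sub>C y) = cnj (cinner (c *\<^sub>C y) x)" by (rule cinner_commute)
  also have "\<dots> = cnj c * cnj (cinner y x)" by (simp only: cinner_scaleC_left complex_cnj_mult)
  also have "cnj (cinner y x) = cinner x y" by (simp only: cinner_commute[of x y])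
  finally show ?thesis .
qed
lemma cinner_zero_left[simp]: "cinner 0 y = 0"
  using cinner_scaleC_left[of 0 0 y] by simp
lemma cinner_zero_right[simp]: "cinner x 0 = 0"
  using cinner_scaleC_right[of x 0 0] by simp
lemma cinner_minus_left: "cinner (- x) y = - cinner x y"
  using cinner_scaleC_left[of "-1" x y] by (simp add: scaleC_minus1)
lemma cinner_minus_right: "cinner x (- y) = - cinner x y"
  using cinner_scaleC_right[of x "-1" y] by (simp add: scaleC_minus1)
lemma cinner_diff_left: "cinner (x - y) z = cinner x z - cinner y z"
  unfolding diff_conv_add_uminus by (simp only: cinner_add_left cinner_minus_left)
lemma cinner_diff_right: "cinner x (y - z) = cinner x y - cinner x z"
  unfolding diff_conv_add_uminus by (simp only: cinner_add_right cinner_minus_right)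
lemma cinner_scaleR_left: "cinner (r *\<^sub>R x) y = complex_of_real r * cinner x y"
  by (simp add: scaleR_scaleC cinner_scaleC_left)
lemma cinner_scaleR_right: "cinner x (r *\<^sub>R y) = complex_of_real r * cinner x y"
  by (simp add: scaleR_scaleC cinner_scaleC_right)
lemma cinner_self_real: "cinner x x = complex_of_real ((norm x)^2)"
proof -
  have "Im (cinner x x) = - Im (cinner x x)" using arg_cong[OF cinner_commute[of x x], of Im] by simp
  then have "Im (cinner x x) = 0" by linarith
  moreover have "(norm x)^2 = Re (cinner x x)"
    using norm_eq_sqrt_cinner[of x] cinner_ge_zero[of x] by simp
  ultimately show ?thesis by (simp add: complex_eq_iff)
qed
lemma norm_sq_Re: "(norm x)^2 = Re (cinner x x)"
  by (simp add: cinner_self_real)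

lemma Re_cinner_sym: "Re (cinner y x) = Re (cinner x y)"
  by (subst cinner_commute) simp

lemma cinner_expand_R: "cinner (x - t *\<^sub>R y) (x - t *\<^sub>R y) =
   cinner x x - of_real t * cinner x y - of_real t * cinner y x + of_real t * of_real t * cinner y y"
  unfolding cinner_diff_left cinner_diff_right cinner_scaleR_left cinner_scaleR_right
  by (simp add: algebra_simps)

lemma real_cs: "Re (cinner x y) \<le> norm x * norm y"
proof (cases "x = 0 \<or> y = 0")
  case True then show ?thesis by auto
next
  case False
  then have nx: "norm x > 0" and ny: "norm y > 0" by auto
  define t where "t = norm x / norm y"
  have tpos: "t > 0" using nx ny by (simp add: t_def)
  have "0 \<le> Re (cinner (x - t *\<^sub>R y) (x - t *\<^sub>R y))" by (rule cinner_ge_zero)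
  also have "\<dots> = (norm x)^2 - 2 * t * Re (cinner x y) + t * t * (norm y)^2"
    unfolding cinner_expand_R by (simp add: norm_sq_Re Re_cinner_sym[of y x])
  also have "t * t * (norm y)^2 = (norm x)^2" using ny by (simp add: t_def power2_eq_square)
  finally have 1: "t * Re (cinner x y) \<le> (norm x)^2" by simp
  have "t * norm y = norm x" using ny by (simp add: t_def)
  then have "(norm x)^2 = t * (norm x * norm y)" by (simp add: power2_eq_square)
  with 1 have "t * Re (cinner x y) \<le> t * (norm x * norm y)" by simp
  then show ?thesis using tpos by simp
qed

lemma norm_scaleC: "norm (a *\<^sub>C (x::'a::complex_hilbert)) = cmod a * norm x"
proof -
  have "cinner (a *\<^sub>C x) (a *\<^sub>C x) = (a * cnj a) * cinner x x"
    by (simp add: cinner_scaleC_left cinner_scaleC_right)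
  also have "\<dots> = complex_of_real ((cmod a)^2 * (norm x)^2)"
    by (simp only: complex_norm_square[symmetric] cinner_self_real of_real_mult)
  finally have "(norm (a *\<^sub>C x))^2 = (cmod a)^2 * (norm x)^2"
    using norm_sq_Re[of "a *\<^sub>C x"] by simp
  then have "(norm (a *\<^sub>C x))^2 = (cmod a * norm x)^2" by (simp add: power_mult_distrib)
  then show ?thesis by (rule power2_eq_imp_eq) auto
qed

lemma cs: "cmod (cinner x y) \<le> norm x * norm y"
proof (cases "cinner x y = 0")
  case True then show ?thesis by simp
next
  case False
  define c where "c = cinner x y"
  define u where "u = cnj c / complex_of_real (cmod c)"
  have cpos: "cmod c > 0" using False c_def by simp
  have u1: "cmod u = 1" using cpos by (simp add: u_def norm_divide)
  have "cinner (u *\<^sub>C x) y = u * c" by (simp add: cinner_scaleC_left c_def)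
  also have "u * c = complex_of_real ((cmod c)^2) / complex_of_real (cmod c)"
    using complex_norm_square[of c] by (simp add: u_def mult.commute)
  also have "\<dots> = complex_of_real (cmod c)" using cpos by (simp add: power2_eq_square)
  finally have "Re (cinner (u *\<^sub>C x) y) = cmod c" by simp
  with real_cs[of "u *\<^sub>C x" y] show ?thesis by (simp add: norm_scaleC u1 c_def)
qed

lemma cinner_ext_right: assumes "\<And>y. cinner a y = cinner b y" shows "a = b"
proof -
  have "cinner (a - b) (a - b) = 0" by (simp add: cinner_diff_left assms)
  then show ?thesis by (simp add: cinner_eq_zero_iff)
qed

lemma cinner_ext_left: assumes "\<And>y. cinner y a = cinner y b" shows "a = b"
proof (rule cinner_ext_right)
  fix y show "cinner a y = cinner b y"
    using assms[of y] by (metis cinner_commute)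
qed

lemma norm_diff_scaleR_sq:
  "(norm (x - t *\<^sub>R y))^2 = (norm x)^2 - 2 * t * Re (cinner x y) + t^2 * (norm y)^2"
  unfolding norm_sq_Re[of "x - t *\<^sub>R y"] cinner_expand_R
  by (simp add: cinner_self_real Re_cinner_sym[of y x] power2_eq_square)

lemma parallelogram:
  "(norm (a + b))^2 + (norm (a - b))^2 = 2 * (norm a)^2 + 2 * (norm (b::'a::complex_hilbert))^2"
proof -
  have "cinner (a + b) (a + b) + cinner (a - b) (a - b) = 2 * cinner a a + 2 * cinner b b"
    unfolding cinner_add_left cinner_add_right cinner_diff_left cinner_diff_right
    by (simp add: algebra_simps)
  from arg_cong[where f=Re, OF this]
  have "Re (cinner (a + b) (a + b)) + Re (cinner (a - b) (a - b)) = 2 * Re (cinner a a) + 2 * Re (cinner b b)"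
    by simp
  then show ?thesis by (simp add: norm_sq_Re)
qed

lemma orth_of_min:
  assumes "\<And>r. norm e \<le> norm (e - r *\<^sub>R n)"
  shows "Re (cinner e n) = 0"
proof (cases "n = 0")
  case True then show ?thesis by simp
next
  case False
  define R where "R = Re (cinner e n)"
  define \<nu> where "\<nu> = (norm n)^2"
  have nu: "\<nu> > 0" using False by (simp add: \<nu>_def)
  define r where "r = R / \<nu>"
  have "(norm e)^2 \<le> (norm (e - r *\<^sub>R n))^2"
    using assms[of r] by (simp add: power_mono)
  also have "\<dots> = (norm e)^2 - 2 * r * R + r^2 * \<nu>"
    by (simp add: norm_diff_scaleR_sq R_def \<nu>_def)
  finally have "2 * r * R \<le> r^2 * \<nu>" by simp
  then have "2 * (R * R / \<nu>) \<le> R * R / \<nu>"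
    using nu by (simp add: r_def power2_eq_square field_simps)
  then have "R * R / \<nu> \<le> 0" by simp
  then have "R * R \<le> 0" using nu by (simp add: divide_le_0_iff)
  moreover have "R * R \<ge> 0" by simp
  ultimately have "R * R = 0" by linarith
  then show ?thesis unfolding R_def[symmetric] by simp
qed

lemma bcl_add: "bounded_clinear f \<Longrightarrow> f (x + y) = f x + f y"
  by (simp add: bounded_clinear_def)
lemma bcl_scaleC: "bounded_clinear f \<Longrightarrow> f (c *\<^sub>C x) = c *\<^sub>C f x"
  by (simp add: bounded_clinear_def)
lemma bcl_zero: "bounded_clinear f \<Longrightarrow> f 0 = 0"
  using bcl_scaleC[of f 0 0] by simp
lemma bcl_minus: "bounded_clinear f \<Longrightarrow> f (- x) = - f x"
  using bcl_scaleC[of f "-1" x] by (simp add: scaleC_minus1)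
lemma bcl_diff: assumes "bounded_clinear f" shows "f (x - y) = f x - f y"
  unfolding diff_conv_add_uminus by (simp only: bcl_add[OF assms] bcl_minus[OF assms])
lemma bcl_bound: assumes "bounded_clinear f" obtains K where "K \<ge> 0" "\<And>x. norm (f x) \<le> norm x * K"
proof -
  obtain K where K: "\<And>x. norm (f x) \<le> norm x * K" using assms unfolding bounded_clinear_def by blast
  have "\<And>x. norm (f x) \<le> norm x * max K 0"
    by (metis K max.cobounded1 mult_left_mono norm_ge_zero order_trans)
  then show ?thesis using that[of "max K 0"] by simp
qed
lemma bcl_scaleR: "bounded_clinear f \<Longrightarrow> f (r *\<^sub>R x) = r *\<^sub>R f x"
  by (simp add: scaleR_scaleC bcl_scaleC)
lemma bcl_bounded_linear: assumes "bounded_clinear f" shows "bounded_linear f"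
proof -
  obtain K where "\<And>x. norm (f x) \<le> norm x * K" using bcl_bound[OF assms] by blast
  then show ?thesis
    by (intro bounded_linear_intro[of f K]) (simp_all add: bcl_add[OF assms] bcl_scaleR[OF assms])
qed
lemma bcl_onorm: "bounded_clinear f \<Longrightarrow> norm (f x) \<le> onorm f * norm x"
  by (rule onorm[OF bcl_bounded_linear])

lemma riesz:
  fixes g :: "'a::complex_hilbert \<Rightarrow> complex"
  assumes gadd: "\<And>x y. g (x + y) = g x + g y" and gsc: "\<And>c x. g (c *\<^sub>C x) = c * g x"
    and gb: "\<And>x. cmod (g x) \<le> norm x * K"
  shows "\<exists>z. \<forall>x. g x = cinner x z"
proof (cases "\<forall>x. g x = 0")
  case True then show ?thesis by (intro exI[of _ 0]) simp
next
  case False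
  then obtain x0 where gx0: "g x0 \<noteq> 0" by auto
  have g0: "g 0 = 0" using gsc[of 0 0] by simp
  have gminus: "g (- x) = - g x" for x using gsc[of "-1" x] by (simp add: scaleC_minus1)
  have gdiff: "g (x - y) = g x - g y" for x y
    unfolding diff_conv_add_uminus by (simp only: gadd gminus)
  have gR: "g (r *\<^sub>R x) = r * g x" for r x by (simp add: scaleR_scaleC gsc)
  define N where "N = {n. g n = 0}"
  have N0: "0 \<in> N" by (simp add: N_def g0)
  define d where "d = Inf ((\<lambda>n. norm (x0 - n)) ` N)"
  have bdd: "bdd_below ((\<lambda>n. norm (x0 - n)) ` N)"
    by (rule bdd_belowI[of _ 0]) auto
  have dle: "d \<le> norm (x0 - n)" if "n \<in> N" for n
    unfolding d_def by (rule cInf_lower) (use that bdd in auto)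
  have d0: "0 \<le> d" unfolding d_def
    by (rule cInf_greatest) (use N0 in auto)
  have approx: "\<exists>n\<in>N. (norm (x0 - n))^2 < d^2 + e" if e: "e > 0" for e
  proof -
    have "d < sqrt (d^2 + e)" using d0 e
      by (metis add.right_neutral add_strict_left_mono real_less_rsqrt)
    then have "Inf ((\<lambda>n. norm (x0 - n)) ` N) < sqrt (d^2 + e)" by (simp add: d_def)
    then obtain n where n: "n \<in> N" "norm (x0 - n) < sqrt (d^2 + e)"
      using cInf_lessD[of "(\<lambda>n. norm (x0 - n)) ` N"] N0 by blast
    then have "(norm (x0 - n))^2 < (sqrt (d^2 + e))^2"
      by (intro power_strict_mono) auto
    also have "\<dots> = d^2 + e" using d0 e by simp
    finally show ?thesis using n by blast
  qed
  have "\<forall>k. \<exists>n\<in>N. (norm (x0 - n))^2 < d^2 + 1 / real (Suc k)"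
    using approx by simp
  then obtain ns where ns: "\<And>k. ns k \<in> N" "\<And>k. (norm (x0 - ns k))^2 < d^2 + 1 / real (Suc k)"
    by metis
  have half: "(1/2) *\<^sub>R (a + b) \<in> N" if "a \<in> N" "b \<in> N" for a b
    using that by (simp add: N_def gR gadd)
  have cauchy_est: "(norm (ns j - ns k))^2 \<le> 2 / real (Suc j) + 2 / real (Suc k)" for j k
  proof -
    define a where "a = x0 - ns j"
    define b where "b = x0 - ns k"
    define m where "m = (1/2) *\<^sub>R (ns j + ns k)"
    have mN: "m \<in> N" unfolding m_def by (rule half[OF ns(1) ns(1)])
    have ab: "a + b = 2 *\<^sub>R (x0 - m)" unfolding a_def b_def m_def
      by (simp add: algebra_simps scaleR_2)
    have "norm (a + b) = 2 * norm (x0 - m)" by (simp add: ab)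
    then have "(norm (a + b))^2 = 4 * (norm (x0 - m))^2" by (simp add: power_mult_distrib)
    moreover have "d^2 \<le> (norm (x0 - m))^2" using dle[OF mN] d0 by (simp add: power_mono)
    ultimately have 1: "4 * d^2 \<le> (norm (a + b))^2" by simp
    have 2: "(norm (a - b))^2 = 2 * (norm a)^2 + 2 * (norm b)^2 - (norm (a + b))^2"
      using parallelogram[of a b] by simp
    have "a - b = ns k - ns j" by (simp add: a_def b_def)
    then have "norm (ns j - ns k) = norm (a - b)" by (simp add: norm_minus_commute)
    moreover have "(norm a)^2 < d^2 + 1 / real (Suc j)" using ns(2)[of j] by (simp add: a_def)
    moreover have "(norm b)^2 < d^2 + 1 / real (Suc k)" using ns(2)[of k] by (simp add: b_def)
    ultimately show ?thesis using 1 2 by simp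
  qed
  have "Cauchy ns"
  proof (rule CauchyI)
    fix e :: real assume e: "e > 0"
    obtain M :: nat where M: "4 / e^2 < real M" using reals_Archimedean2 by blast
    show "\<exists>M. \<forall>m\<ge>M. \<forall>n\<ge>M. norm (ns m - ns n) < e"
    proof (intro exI allI impI)
      fix m n assume mn: "M \<le> m" "M \<le> n"
      have e2: "e^2 > 0" using e by simp
      have "2 / real (Suc m) \<le> 2 / real (Suc M)" using mn by (intro divide_left_mono) auto
      moreover have "2 / real (Suc n) \<le> 2 / real (Suc M)" using mn by (intro divide_left_mono) auto
      moreover have "4 / real (Suc M) < e^2"
      proof -
        have "4 < real M * e^2" using M e2 by (simp add: divide_less_eq)
        also have "\<dots> \<le> real (Suc M) * e^2" using e2 by (intro mult_right_mono) auto
        finally show ?thesis by (simp add: divide_less_eq mult.commute)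
      qed
      ultimately have "(norm (ns m - ns n))^2 < e^2" using cauchy_est[of m n] by simp
      then show "norm (ns m - ns n) < e" using e by (simp add: power_less_imp_less_base)
    qed
  qed
  then obtain n0 where lim: "ns \<longlonglongrightarrow> n0" using Cauchy_convergent_iff convergent_def by blast
  have gn0: "g n0 = 0"
  proof -
    have "cmod (g n0) \<le> norm (ns k - n0) * K" for k
      using gb[of "ns k - n0"] ns(1)[of k] by (simp add: gdiff N_def)
    moreover have "(\<lambda>k. norm (ns k - n0) * K) \<longlonglongrightarrow> 0 * K"
      by (intro tendsto_intros) (use lim in \<open>simp add: LIM_zero_iff tendsto_norm_zero\<close>)
    ultimately have "cmod (g n0) \<le> 0 * K"
      by (intro LIMSEQ_le_const[of "\<lambda>k. norm (ns k - n0) * K"]) auto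
    then show ?thesis by simp
  qed
  define e where "e = x0 - n0"
  have ge: "g e = g x0" by (simp add: e_def gdiff gn0)
  have e_le_d: "norm e \<le> d"
  proof -
    have "(\<lambda>k. (norm (x0 - ns k))^2) \<longlonglongrightarrow> (norm (x0 - n0))^2"
      by (intro tendsto_intros lim)
    moreover have "(\<lambda>k. d^2 + 1 / real (Suc k)) \<longlonglongrightarrow> d^2 + 0"
      by (intro tendsto_intros LIMSEQ_inverse_real_of_nat[unfolded inverse_eq_divide])
    ultimately have "(norm (x0 - n0))^2 \<le> d^2 + 0"
      by (rule LIMSEQ_le) (use ns(2) less_imp_le in blast)
    then show ?thesis using d0 by (simp add: e_def power2_le_iff_abs_le)
  qed
  have emin: "norm e \<le> norm (e - r *\<^sub>R n)" if "n \<in> N" for n r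
  proof -
    have "n0 + r *\<^sub>R n \<in> N" using that gn0 by (simp add: N_def gadd gR)
    then have "d \<le> norm (x0 - (n0 + r *\<^sub>R n))" by (rule dle)
    then show ?thesis using e_le_d by (simp add: e_def algebra_simps)
  qed
  have orth: "cinner n e = 0" if "n \<in> N" for n
  proof -
    have iN: "\<i> *\<^sub>C n \<in> N" using that by (simp add: N_def gsc)
    have r1: "Re (cinner e n) = 0" by (rule orth_of_min) (rule emin[OF that])
    have r2: "Re (cinner e (\<i> *\<^sub>C n)) = 0" by (rule orth_of_min) (rule emin[OF iN])
    have "Re (cinner e (\<i> *\<^sub>C n)) = Im (cinner e n)" by (simp add: cinner_scaleC_right)
    with r1 r2 have "cinner e n = 0" by (simp add: complex_eq_iff)
    then show ?thesis by (subst cinner_commute) simp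
  qed
  have gne: "g e \<noteq> 0" using ge gx0 by simp
  then have ene: "e \<noteq> 0" using g0 by auto
  define \<nu> where "\<nu> = complex_of_real ((norm e)^2)"
  have nu: "\<nu> \<noteq> 0" using ene by (simp add: \<nu>_def)
  have ee: "cinner e e = \<nu>" by (simp add: \<nu>_def cinner_self_real)
  show ?thesis
  proof (intro exI allI)
    fix x
    define w where "w = x - (g x / g e) *\<^sub>C e"
    have "g w = 0" using gne by (simp add: w_def gdiff gsc)
    then have "cinner w e = 0" using orth by (simp add: N_def)
    then have xe: "cinner x e = (g x / g e) * \<nu>"
      by (simp add: w_def cinner_diff_left cinner_scaleC_left ee)
    have "cinner x ((cnj (g e) / \<nu>) *\<^sub>C e) = (g e / cnj \<nu>) * cinner x e"
      by (simp add: cinner_scaleC_right)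
    also have "cnj \<nu> = \<nu>" by (simp add: \<nu>_def)
    finally show "g x = cinner x ((cnj (g e) / \<nu>) *\<^sub>C e)"
      using xe gne nu by simp
  qed
qed

lemma adj_exists:
  fixes S :: "'a::complex_hilbert \<Rightarrow> 'a"
  assumes S: "bounded_clinear S"
  shows "\<exists>A. \<forall>x y. cinner (S x) y = cinner x (A y)"
proof -
  obtain K where K: "K \<ge> 0" "\<And>x. norm (S x) \<le> norm x * K" using bcl_bound[OF S] by blast
  have "\<forall>y. \<exists>z. \<forall>x. cinner (S x) y = cinner x z"
  proof
    fix y
    show "\<exists>z. \<forall>x. cinner (S x) y = cinner x z"
    proof (rule riesz[where K = "K * norm y"])
      fix x1 x2 show "cinner (S (x1 + x2)) y = cinner (S x1) y + cinner (S x2) y"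
        by (simp add: bcl_add[OF S] cinner_add_left)
    next
      fix c x show "cinner (S (c *\<^sub>C x)) y = c * cinner (S x) y"
        by (simp add: bcl_scaleC[OF S] cinner_scaleC_left)
    next
      fix x
      have "cmod (cinner (S x) y) \<le> norm (S x) * norm y" by (rule cs)
      also have "\<dots> \<le> norm x * K * norm y" using K(2)[of x] by (simp add: mult_right_mono)
      finally show "cmod (cinner (S x) y) \<le> norm x * (K * norm y)" by (simp add: mult.assoc)
    qed
  qed
  then show ?thesis by metis
qed

lemma adj_prop:
  assumes S: "bounded_clinear S"
  shows "cinner (S x) y = cinner x (adj S y)"
proof -
  obtain A where A: "\<forall>x y. cinner (S x) y = cinner x (A y)" using adj_exists[OF S] by blast
  have uniq: "B = A" if "\<forall>x y. cinner (S x) y = cinner x (B y)" for B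
  proof
    fix y show "B y = A y" by (rule cinner_ext_left) (use that A in metis)
  qed
  have "adj S = A" unfolding adj_def
    by (rule the_equality) (use A uniq in auto)
  then show ?thesis using A by simp
qed

lemma adj_prop2:
  assumes S: "bounded_clinear S"
  shows "cinner (adj S x) y = cinner x (S y)"
  by (metis adj_prop[OF S] cinner_commute)

lemma adj_bcl:
  assumes S: "bounded_clinear S"
  shows "bounded_clinear (adj S)"
proof -
  let ?A = "adj S"
  have add: "?A (x + y) = ?A x + ?A y" for x y
    by (rule cinner_ext_left) (simp add: adj_prop[OF S, symmetric] cinner_add_right)
  have sc: "?A (c *\<^sub>C x) = c *\<^sub>C ?A x" for c x
    by (rule cinner_ext_left) (simp add: adj_prop[OF S, symmetric] cinner_scaleC_right)
  obtain K where K: "K \<ge> 0" "\<And>x. norm (S x) \<le> norm x * K" using bcl_bound[OF S] by blast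
  have bnd: "norm (?A y) \<le> norm y * K" for y
  proof (cases "?A y = 0")
    case True then show ?thesis using K by simp
  next
    case False
    have "(norm (?A y))^2 = Re (cinner (?A y) (?A y))" by (rule norm_sq_Re)
    also have "cinner (?A y) (?A y) = cinner (S (?A y)) y" by (simp add: adj_prop[OF S])
    also have "Re \<dots> \<le> cmod (cinner (S (?A y)) y)" by (rule complex_Re_le_cmod)
    also have "\<dots> \<le> norm (S (?A y)) * norm y" by (rule cs)
    also have "\<dots> \<le> norm (?A y) * K * norm y" using K(2) by (simp add: mult_right_mono)
    finally have "norm (?A y) * norm (?A y) \<le> norm (?A y) * (norm y * K)"
      by (simp add: power2_eq_square algebra_simps)
    then show ?thesis using False by simp
  qed
  show ?thesis unfolding bounded_clinear_def using add sc bnd by blast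
qed

definition clin :: "('a::complex_vector \<Rightarrow> 'b::complex_vector) \<Rightarrow> bool" where
  "clin G \<longleftrightarrow> (\<forall>x y. G (x + y) = G x + G y) \<and> (\<forall>c x. G (c *\<^sub>C x) = c *\<^sub>C G x)"

lemma clin_add: "clin G \<Longrightarrow> G (x + y) = G x + G y" by (simp add: clin_def)
lemma clin_scaleC: "clin G \<Longrightarrow> G (c *\<^sub>C x) = c *\<^sub>C G x" by (simp add: clin_def)
lemma clin_minus: "clin G \<Longrightarrow> G (- x) = - G x"
  using clin_scaleC[of G "-1" x] by (simp add: scaleC_minus1)
lemma clin_diff: assumes "clin G" shows "G (x - y) = G x - G y"
  unfolding diff_conv_add_uminus by (simp only: clin_add[OF assms] clin_minus[OF assms])
lemma clin_zero: "clin G \<Longrightarrow> G 0 = 0"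
  using clin_scaleC[of G 0 0] by simp
lemma bcl_clin: "bounded_clinear f \<Longrightarrow> clin f"
  by (simp add: clin_def bounded_clinear_def)
lemma clin_comp: "clin F \<Longrightarrow> clin G \<Longrightarrow> clin (F \<circ> G)"
  by (simp add: clin_def)

definition Lop :: "('a::complex_vector \<Rightarrow> 'a) \<Rightarrow> complex \<Rightarrow> 'a \<Rightarrow> 'a" where
  "Lop X c = (\<lambda>z. X z - c *\<^sub>C z)"

lemma clin_Lop: "clin X \<Longrightarrow> clin (Lop X c)"
  unfolding clin_def Lop_def
  by (simp add: scaleC_add_right scaleC_diff_right scaleC_scaleC mult.commute algebra_simps)

definition selfadj :: "('a::complex_hilbert \<Rightarrow> 'a) \<Rightarrow> bool" where
  "selfadj X \<longleftrightarrow> (\<forall>x y. cinner (X x) y = cinner x (X y))"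

lemma Lop_cinner:
  assumes X: "selfadj X"
  shows "cinner (Lop X (\<i> * complex_of_real s) a) (Lop X (\<i> * complex_of_real s) b)
         = cinner (X a) (X b) + complex_of_real (s^2) * cinner a b"
proof -
  have sa: "cinner (X a) b = cinner a (X b)" using X by (simp add: selfadj_def)
  show ?thesis
    unfolding Lop_def cinner_diff_left cinner_diff_right cinner_scaleC_left cinner_scaleC_right sa
    by (simp add: algebra_simps power2_eq_square)
qed

lemma Lop_norm:
  assumes X: "selfadj X"
  shows "(norm (Lop X (\<i> * complex_of_real s) a))^2 = (norm (X a))^2 + s^2 * (norm a)^2"
proof -
  have "(norm (Lop X (\<i> * complex_of_real s) a))^2
     = Re (cinner (Lop X (\<i> * complex_of_real s) a) (Lop X (\<i> * complex_of_real s) a))"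
    by (rule norm_sq_Re)
  also have "\<dots> = Re (cinner (X a) (X a)) + s^2 * Re (cinner a a)"
    by (simp add: Lop_cinner[OF X])
  also have "\<dots> = (norm (X a))^2 + s^2 * (norm a)^2" by (simp add: norm_sq_Re)
  finally show ?thesis .
qed

lemma Lop_bij:
  fixes X :: "'a::complex_hilbert \<Rightarrow> 'a"
  assumes X: "bounded_clinear X" "selfadj X"
    and K: "K \<ge> 0" "\<And>x. norm (X x) \<le> norm x * K" and s: "K < \<bar>s\<bar>"
  shows "bij (Lop X (\<i> * complex_of_real s))"
proof -
  let ?c = "\<i> * complex_of_real s"
  have s0: "s \<noteq> 0" using K s by auto
  have lin: "clin (Lop X ?c)" by (rule clin_Lop[OF bcl_clin[OF X(1)]])
  have "inj (Lop X ?c)"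
  proof (rule injI)
    fix a b assume eq: "Lop X ?c a = Lop X ?c b"
    have "Lop X ?c (a - b) = 0" using eq by (simp add: clin_diff[OF lin])
    then have "(norm (X (a - b)))^2 + s^2 * (norm (a - b))^2 = 0"
      using Lop_norm[OF X(2), of s "a - b"] by simp
    moreover have "(norm (X (a - b)))^2 \<ge> 0" by simp
    moreover have "s^2 > 0" using s0 by simp
    ultimately have "(norm (a - b))^2 \<le> 0"
      by (smt (verit, best) mult_pos_pos zero_le_power2 zero_less_power2)
    then show "a = b" by simp
  qed
  moreover have "surj (Lop X ?c)"
  proof -
    have "\<exists>x. Lop X ?c x = y" for y
    proof -
      define F where "F = (\<lambda>x. (1 / ?c) *\<^sub>C (X x - y))"
      have cm: "cmod (1 / ?c) = 1 / \<bar>s\<bar>" by (simp add: norm_divide norm_mult)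
      have lip: "dist (F x) (F x') \<le> (K / \<bar>s\<bar>) * dist x x'" for x x'
      proof -
        have "F x - F x' = (1 / ?c) *\<^sub>C (X (x - x'))"
          by (simp add: F_def scaleC_diff_right[symmetric] bcl_diff[OF X(1)])
        then have "dist (F x) (F x') = (1 / \<bar>s\<bar>) * norm (X (x - x'))"
          by (simp add: dist_norm norm_scaleC cm)
        also have "\<dots> \<le> (1 / \<bar>s\<bar>) * (norm (x - x') * K)"
          using K(2) by (intro mult_left_mono) auto
        finally show ?thesis by (simp add: dist_norm mult.commute)
      qed
      have "0 \<le> K / \<bar>s\<bar>" using K by simp
      moreover have "K / \<bar>s\<bar> < 1" using s K by simp
      ultimately obtain x where fx: "F x = x" using banach_fix_type[of "K / \<bar>s\<bar>" F] lip by blast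
      have "?c *\<^sub>C x = ?c *\<^sub>C F x" using fx by simp
      also have "\<dots> = X x - y" using s0 by (simp add: F_def scaleC_scaleC)
      finally have "Lop X ?c x = y" by (simp add: Lop_def)
      then show ?thesis by blast
    qed
    then show ?thesis by (metis surjI)
  qed
  ultimately show ?thesis by (simp add: bij_def)
qed

definition Kinv :: "('a::complex_vector \<Rightarrow> 'a) \<Rightarrow> complex \<Rightarrow> 'a \<Rightarrow> 'a" where
  "Kinv X c = inv (Lop X c)"

definition Wop :: "('a::complex_vector \<Rightarrow> 'a) \<Rightarrow> real \<Rightarrow> 'a \<Rightarrow> 'a" where
  "Wop X s = Lop X (\<i> * complex_of_real (- s)) \<circ> Kinv X (\<i> * complex_of_real s)"

lemma K_left: "bij (Lop X c) \<Longrightarrow> Kinv X c (Lop X c x) = x"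
  unfolding Kinv_def by (simp add: bij_is_inj)
lemma K_right: "bij (Lop X c) \<Longrightarrow> Lop X c (Kinv X c y) = y"
  unfolding Kinv_def by (simp add: bij_is_surj surj_f_inv_f)

lemma clin_Kinv:
  assumes "clin X" "bij (Lop X c)"
  shows "clin (Kinv X c)"
proof -
  have L: "clin (Lop X c)" by (rule clin_Lop[OF assms(1)])
  have "Kinv X c (x + y) = Kinv X c x + Kinv X c y" for x y
  proof -
    have "Lop X c (Kinv X c x + Kinv X c y) = x + y"
      by (simp add: clin_add[OF L] K_right[OF assms(2)])
    then show ?thesis by (metis K_left[OF assms(2)])
  qed
  moreover have "Kinv X c (a *\<^sub>C x) = a *\<^sub>C Kinv X c x" for a x
  proof -
    have "Lop X c (a *\<^sub>C Kinv X c x) = a *\<^sub>C x"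
      by (simp add: clin_scaleC[OF L] K_right[OF assms(2)])
    then show ?thesis by (metis K_left[OF assms(2)])
  qed
  ultimately show ?thesis by (simp add: clin_def)
qed

lemma clin_Wop:
  assumes "clin X" "bij (Lop X (\<i> * complex_of_real s))"
  shows "clin (Wop X s)"
  unfolding Wop_def by (intro clin_comp clin_Lop clin_Kinv assms)

lemma Wop_Lop:
  assumes "bij (Lop X (\<i> * complex_of_real s))"
  shows "Wop X s (Lop X (\<i> * complex_of_real s) z) = Lop X (\<i> * complex_of_real (- s)) z"
  by (simp add: Wop_def K_left[OF assms])

lemma Wop_cinner:
  assumes X: "selfadj X" and b: "bij (Lop X (\<i> * complex_of_real s))"
  shows "cinner (Wop X s u) (Wop X s v) = cinner u v"
proof -
  let ?K = "Kinv X (\<i> * complex_of_real s)"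
  have "cinner (Wop X s u) (Wop X s v)
      = cinner (X (?K u)) (X (?K v)) + complex_of_real ((- s)^2) * cinner (?K u) (?K v)"
    unfolding Wop_def comp_def by (rule Lop_cinner[OF X])
  also have "\<dots> = cinner (Lop X (\<i> * complex_of_real s) (?K u)) (Lop X (\<i> * complex_of_real s) (?K v))"
    by (simp add: Lop_cinner[OF X])
  also have "\<dots> = cinner u v" by (simp add: K_right[OF b])
  finally show ?thesis .
qed

lemma Wop_norm:
  assumes X: "selfadj X" and b: "bij (Lop X (\<i> * complex_of_real s))"
  shows "norm (Wop X s u) = norm u"
  using Wop_cinner[OF X b, of u u] by (simp add: norm_eq_sqrt_cinner)

lemma intertw_Lop:
  assumes "clin C" "\<And>z. X1 (C z) = C (X2 z)"
  shows "Lop X1 c (C z) = C (Lop X2 c z)"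
  by (simp add: Lop_def assms clin_diff[OF assms(1)] clin_scaleC[OF assms(1)])

lemma intertw_Kinv:
  assumes "clin C" "\<And>z. X1 (C z) = C (X2 z)" "bij (Lop X1 c)" "bij (Lop X2 c)"
  shows "Kinv X1 c (C z) = C (Kinv X2 c z)"
proof -
  have "C z = Lop X1 c (C (Kinv X2 c z))"
    by (simp add: intertw_Lop[of C X1 X2, OF assms(1,2)] K_right[OF assms(4)])
  then show ?thesis by (simp add: K_left[OF assms(3)])
qed

lemma intertw_Wop:
  assumes "clin C" "\<And>z. X1 (C z) = C (X2 z)"
    "bij (Lop X1 (\<i> * complex_of_real s))" "bij (Lop X2 (\<i> * complex_of_real s))"
  shows "Wop X1 s (C z) = C (Wop X2 s z)"
  unfolding Wop_def comp_def
  by (simp add: intertw_Kinv[of C X1 X2, OF assms] intertw_Lop[of C X1 X2, OF assms(1,2)])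


definition comm_on :: "'a set \<Rightarrow> ('a \<Rightarrow> 'a) \<Rightarrow> ('a \<Rightarrow> 'a) \<Rightarrow> bool" where
  "comm_on L F G \<longleftrightarrow> (\<forall>z\<in>L. F (G z) = G (F z))"
definition maps :: "'a set \<Rightarrow> ('a \<Rightarrow> 'a) \<Rightarrow> bool" where
  "maps L F \<longleftrightarrow> (\<forall>z\<in>L. F z \<in> L)"
definition subsp :: "'a::complex_vector set \<Rightarrow> bool" where
  "subsp L \<longleftrightarrow> (\<forall>a\<in>L. \<forall>b\<in>L. a - b \<in> L) \<and> (\<forall>a\<in>L. \<forall>c. c *\<^sub>C a \<in> L)"

lemma comm_sym: "comm_on L F G \<Longrightarrow> comm_on L G F"
  by (simp add: comm_on_def)
lemma maps_Lop: "subsp L \<Longrightarrow> maps L X \<Longrightarrow> maps L (Lop X c)"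
  by (simp add: maps_def subsp_def Lop_def)
lemma maps_comp: "maps L F \<Longrightarrow> maps L G \<Longrightarrow> maps L (F \<circ> G)"
  by (simp add: maps_def)
lemma maps_pow: "maps L F \<Longrightarrow> maps L (F ^^ n)"
  by (induction n) (auto simp: maps_def)
lemma comm_Lop: "clin G \<Longrightarrow> comm_on L X G \<Longrightarrow> comm_on L (Lop X c) G"
  by (simp add: comm_on_def Lop_def clin_diff clin_scaleC)
lemma comm_inv:
  assumes "bij (Lop X c)" "maps L (Kinv X c)" "maps L G" "comm_on L (Lop X c) G"
  shows "comm_on L (Kinv X c) G"
  unfolding comm_on_def
proof
  fix z assume z: "z \<in> L"
  define w where "w = Kinv X c z"
  have w: "w \<in> L" using assms(2) z by (simp add: maps_def w_def)
  have zw: "z = Lop X c w" by (simp add: w_def K_right[OF assms(1)])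
  have "G z = Lop X c (G w)" using assms(4) w by (simp add: comm_on_def zw)
  then show "Kinv X c (G z) = G (Kinv X c z)" by (simp add: K_left[OF assms(1)] w_def)
qed
lemma comm_comp:
  assumes "comm_on L F G1" "comm_on L F G2" "maps L G2"
  shows "comm_on L F (G1 \<circ> G2)"
  using assms by (simp add: comm_on_def maps_def)
lemma comm_pow:
  assumes "comm_on L F G" "maps L G"
  shows "comm_on L F (G ^^ n)"
proof (induction n)
  case 0 then show ?case by (simp add: comm_on_def)
next
  case (Suc n)
  have "comm_on L F (G \<circ> G ^^ n)" by (rule comm_comp[OF assms(1) Suc maps_pow[OF assms(2)]])
  then show ?case by (simp only: funpow.simps(2))
qed

lemma fam_comm:
  fixes X Z :: "'a::complex_vector \<Rightarrow> 'a"
  assumes L: "subsp L" and cl: "clin X" "clin Z"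
    and bX: "bij (Lop X (\<i> * complex_of_real sx))" and bZ: "bij (Lop Z (\<i> * complex_of_real sz))"
    and mX: "maps L X" and mZ: "maps L Z"
    and mKX: "maps L (Kinv X (\<i> * complex_of_real sx))"
    and mKZ: "maps L (Kinv Z (\<i> * complex_of_real sz))"
    and cXZ: "comm_on L X Z"
  shows "comm_on L (Lop X c) (Wop Z sz)" "comm_on L (Wop X sx) (Wop Z sz)"
    "maps L (Wop X sx)"
proof -
  let ?cx = "\<i> * complex_of_real sx" and ?cz = "\<i> * complex_of_real sz"
  have c1: "comm_on L (Lop X a) (Lop Z b)" for a b
  proof -
    have "comm_on L (Lop X a) Z" by (rule comm_Lop[OF cl(2) cXZ])
    then have "comm_on L Z (Lop X a)" by (rule comm_sym)
    then have "comm_on L (Lop Z b) (Lop X a)" by (rule comm_Lop[OF clin_Lop[OF cl(1)]])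
    then show ?thesis by (rule comm_sym)
  qed
  have c2: "comm_on L (Kinv X ?cx) (Lop Z b)" for b
    by (rule comm_inv[OF bX mKX maps_Lop[OF L mZ] c1])
  have c3: "comm_on L (Lop X a) (Kinv Z ?cz)" for a
    by (rule comm_sym, rule comm_inv[OF bZ mKZ maps_Lop[OF L mX] comm_sym[OF c1]])
  have c4: "comm_on L (Kinv X ?cx) (Kinv Z ?cz)"
    by (rule comm_inv[OF bX mKX mKZ c3])
  have c5: "comm_on L (Lop X a) (Wop Z sz)" for a
    unfolding Wop_def by (rule comm_comp[OF c1 c3 mKZ])
  then show "comm_on L (Lop X c) (Wop Z sz)" .
  have c6: "comm_on L (Kinv X ?cx) (Wop Z sz)"
    unfolding Wop_def by (rule comm_comp[OF c2 c4 mKZ])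
  have "comm_on L (Wop Z sz) (Wop X sx)"
    unfolding Wop_def[of X] by (rule comm_comp[OF comm_sym[OF c5] comm_sym[OF c6] mKX])
  then show "comm_on L (Wop X sx) (Wop Z sz)" by (rule comm_sym)
  show "maps L (Wop X sx)" unfolding Wop_def
    by (rule maps_comp[OF maps_Lop[OF L mX] mKX])
qed

definition lc :: "complex \<Rightarrow> complex \<Rightarrow> ('a::complex_vector \<Rightarrow> 'a) \<Rightarrow> ('a \<Rightarrow> 'a) \<Rightarrow> 'a \<Rightarrow> 'a" where
  "lc a b F G = (\<lambda>z. a *\<^sub>C F z + b *\<^sub>C G z)"

lemma clin_lc: assumes "clin F" "clin G" shows "clin (lc a b F G)"
proof -
  have "lc a b F G (x + y) = lc a b F G x + lc a b F G y" for x y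
    by (simp add: lc_def clin_add[OF assms(1)] clin_add[OF assms(2)] scaleC_add_right add_ac)
  moreover have "lc a b F G (c *\<^sub>C x) = c *\<^sub>C lc a b F G x" for c x
    by (simp add: lc_def clin_scaleC[OF assms(1)] clin_scaleC[OF assms(2)] scaleC_add_right
        scaleC_scaleC mult.commute)
  ultimately show ?thesis by (simp add: clin_def)
qed

lemma bcl_lc: assumes "bounded_clinear F" "bounded_clinear G" shows "bounded_clinear (lc a b F G)"
proof -
  obtain K1 where K1: "K1 \<ge> 0" "\<And>x. norm (F x) \<le> norm x * K1" using bcl_bound[OF assms(1)] by blast
  obtain K2 where K2: "K2 \<ge> 0" "\<And>x. norm (G x) \<le> norm x * K2" using bcl_bound[OF assms(2)] by blast
  have "norm (lc a b F G x) \<le> norm x * (cmod a * K1 + cmod b * K2)" for x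
  proof -
    have "norm (lc a b F G x) \<le> cmod a * norm (F x) + cmod b * norm (G x)"
      unfolding lc_def using norm_triangle_ineq[of "a *\<^sub>C F x" "b *\<^sub>C G x"] by (simp add: norm_scaleC)
    also have "\<dots> \<le> cmod a * (norm x * K1) + cmod b * (norm x * K2)"
      using K1 K2 by (intro add_mono mult_left_mono) auto
    finally show ?thesis by (simp add: algebra_simps)
  qed
  moreover have "clin (lc a b F G)" by (intro clin_lc bcl_clin assms)
  ultimately show ?thesis unfolding bounded_clinear_def clin_def by blast
qed

lemma selfadj_lc:
  assumes adj: "\<And>x y. cinner (F x) y = cinner x (G y)" and b: "b = cnj a"
  shows "selfadj (lc a b F G)"
  unfolding selfadj_def
proof (intro allI)
  fix x y
  have g: "cinner (G x) y = cinner x (F y)" by (metis adj cinner_commute)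
  show "cinner (lc a b F G x) y = cinner x (lc a b F G y)"
    unfolding lc_def cinner_add_left cinner_add_right cinner_scaleC_left cinner_scaleC_right
    by (simp add: adj g b)
qed

lemma lc_intertw:
  assumes "clin C" "\<And>z. F1 (C z) = C (F2 z)" "\<And>z. G1 (C z) = C (G2 z)"
  shows "lc a b F1 G1 (C z) = C (lc a b F2 G2 z)"
  by (simp add: lc_def assms clin_add[OF assms(1)] clin_scaleC[OF assms(1)])

lemma comm_lc_left:
  assumes "comm_on L F1 H" "comm_on L F2 H" "clin H"
  shows "comm_on L (lc a b F1 F2) H"
  using assms by (simp add: comm_on_def lc_def clin_add clin_scaleC)

lemma maps_lc: "subsp L \<Longrightarrow> maps L F \<Longrightarrow> maps L G \<Longrightarrow> maps L (lc a b F G)"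
proof -
  assume L: "subsp L" and F: "maps L F" and G: "maps L G"
  have add: "u + v \<in> L" if "u \<in> L" "v \<in> L" for u v
  proof -
    have "(-1) *\<^sub>C v \<in> L" using L that by (simp add: subsp_def)
    then have "u - (-1) *\<^sub>C v \<in> L" using L that by (simp add: subsp_def)
    then show ?thesis by (simp add: scaleC_minus1)
  qed
  show ?thesis unfolding maps_def lc_def
    using F G L add by (simp add: maps_def subsp_def)
qed

lemma lc_comb:
  "lc a b F G z + c *\<^sub>C lc a' b' F G z = (a + c * a') *\<^sub>C F z + (b + c * b') *\<^sub>C G z"
  by (simp add: lc_def scaleC_add_right scaleC_add_left scaleC_scaleC add_ac)

definition ReP :: "('a::complex_vector \<Rightarrow> 'a) \<Rightarrow> ('a \<Rightarrow> 'a) \<Rightarrow> 'a \<Rightarrow> 'a" where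
  "ReP R R' = lc (1/2) (1/2) R R'"
definition ImP :: "('a::complex_vector \<Rightarrow> 'a) \<Rightarrow> ('a \<Rightarrow> 'a) \<Rightarrow> 'a \<Rightarrow> 'a" where
  "ImP R R' = lc (- \<i>/2) (\<i>/2) R R'"

lemma R_decomp: "R z = ReP R R' z + \<i> *\<^sub>C ImP R R' z"
proof -
  have "ReP R R' z + \<i> *\<^sub>C ImP R R' z = (1/2 + \<i> * (- \<i>/2)) *\<^sub>C R z + (1/2 + \<i> * (\<i>/2)) *\<^sub>C R' z"
    unfolding ReP_def ImP_def by (rule lc_comb)
  also have "\<dots> = R z" by (simp add: field_simps)
  finally show ?thesis by simp
qed

lemma R'_decomp: "R' z = ReP R R' z + (- \<i>) *\<^sub>C ImP R R' z"
proof -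
  have "ReP R R' z + (- \<i>) *\<^sub>C ImP R R' z = (1/2 + (- \<i>) * (- \<i>/2)) *\<^sub>C R z + (1/2 + (- \<i>) * (\<i>/2)) *\<^sub>C R' z"
    unfolding ReP_def ImP_def by (rule lc_comb)
  also have "\<dots> = R' z" by (simp add: field_simps)
  finally show ?thesis by simp
qed

lemma comm_ReP_ImP:
  assumes "clin R" "clin R'" "comm_on L R R'"
  shows "comm_on L (ReP R R') (ImP R R')"
proof -
  have c3: "\<forall>z\<in>L. R (R' z) = R' (R z)" using assms(3) by (simp add: comm_on_def)
  have cR: "comm_on L R (ImP R R')"
    by (rule comm_sym, unfold ImP_def, rule comm_lc_left)
       (use c3 in \<open>auto simp: comm_on_def assms(1)\<close>)
  have cR': "comm_on L R' (ImP R R')"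
    by (rule comm_sym, unfold ImP_def, rule comm_lc_left)
       (use c3 in \<open>auto simp: comm_on_def assms(2)\<close>)
  show ?thesis unfolding ReP_def
    by (rule comm_lc_left[OF cR cR']) (simp add: ImP_def clin_lc assms)
qed

lemma avg_limit:
  fixes x B K :: real
  assumes "\<And>N::nat. N \<ge> 1 \<Longrightarrow> real N * real N * x \<le> real N * real N * B + real N * K"
  shows "x \<le> B"
proof (rule ccontr)
  assume "\<not> x \<le> B"
  then have d: "x - B > 0" by simp
  obtain N :: nat where N: "real N > max 1 (K / (x - B))" using reals_Archimedean2 by blast
  then have N1: "N \<ge> 1" and Npos: "real N > 0" by auto
  have "real N * real N * x \<le> real N * real N * B + real N * K" using assms[OF N1] .
  then have "real N * (real N * x) \<le> real N * (real N * B + K)" by (simp add: algebra_simps)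
  then have "real N * x \<le> real N * B + K" using Npos by (simp add: mult_le_cancel_left)
  then have "real N * (x - B) \<le> K" by (simp add: algebra_simps)
  moreover have "K / (x - B) < real N" using N by simp
  then have "K < real N * (x - B)" using d by (simp add: divide_less_eq)
  ultimately show False by simp
qed

lemma double_telescope:
  fixes g h \<Phi> :: "nat \<Rightarrow> nat \<Rightarrow> complex"
  assumes "\<And>k l. \<Phi> k l = c0 + \<alpha> * (g (Suc k) l - g k l) + \<beta> * (h k (Suc l) - h k l)"
  shows "(\<Sum>k<N. \<Sum>l<N. \<Phi> k l) = of_nat (N * N) * c0 + \<alpha> * (\<Sum>l<N. g N l - g 0 l)
           + \<beta> * (\<Sum>k<N. h k N - h k 0)"
proof -
  have "(\<Sum>k<N. \<Sum>l<N. \<Phi> k l) = (\<Sum>k<N. \<Sum>l<N. c0) + (\<Sum>k<N. \<Sum>l<N. \<alpha> * (g (Suc k) l - g k l))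
        + (\<Sum>k<N. \<Sum>l<N. \<beta> * (h k (Suc l) - h k l))"
    by (simp add: assms sum.distrib)
  also have "(\<Sum>k<N. \<Sum>l<N. c0) = of_nat (N * N) * c0" by simp
  also have "(\<Sum>k<N. \<Sum>l<N. \<alpha> * (g (Suc k) l - g k l)) = \<alpha> * (\<Sum>k<N. \<Sum>l<N. (g (Suc k) l - g k l))"
    by (simp only: sum_distrib_left)
  also have "(\<Sum>k<N. \<Sum>l<N. (g (Suc k) l - g k l)) = (\<Sum>l<N. \<Sum>k<N. (g (Suc k) l - g k l))"
    by (rule sum.swap)
  also have "(\<Sum>l<N. \<Sum>k<N. (g (Suc k) l - g k l)) = (\<Sum>l<N. g N l - g 0 l)"
  proof -
    have tl: "(\<Sum>k<N. g (Suc k) l - g k l) = g N l - g 0 l" for l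
      using sum_lessThan_telescope[of "\<lambda>k. g k l" N] by simp
    show ?thesis by (simp add: tl)
  qed
  also have "(\<Sum>k<N. \<Sum>l<N. \<beta> * (h k (Suc l) - h k l)) = \<beta> * (\<Sum>k<N. h k N - h k 0)"
  proof -
    have tl: "(\<Sum>l<N. h k (Suc l) - h k l) = h k N - h k 0" for k
      using sum_lessThan_telescope[of "h k" N] by simp
    show ?thesis by (simp only: sum_distrib_left[symmetric] tl)
  qed
  finally show ?thesis .
qed

lemma avg_bound:
  fixes g h \<Phi> :: "nat \<Rightarrow> nat \<Rightarrow> complex"
  assumes eq: "\<And>k l. \<Phi> k l = c0 + \<alpha> * (g (Suc k) l - g k l) + \<beta> * (h k (Suc l) - h k l)"
    and bP: "\<And>k l. cmod (\<Phi> k l) \<le> B" and bg: "\<And>k l. cmod (g k l) \<le> G"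
    and bh: "\<And>k l. cmod (h k l) \<le> H"
  shows "cmod c0 \<le> B"
proof (rule avg_limit[where K = "2 * cmod \<alpha> * G + 2 * cmod \<beta> * H"])
  fix N :: nat assume "N \<ge> 1"
  have tel: "(\<Sum>k<N. \<Sum>l<N. \<Phi> k l) = of_nat (N * N) * c0 + \<alpha> * (\<Sum>l<N. g N l - g 0 l)
           + \<beta> * (\<Sum>k<N. h k N - h k 0)" by (rule double_telescope) (rule eq)
  have s1: "cmod (\<Sum>k<N. \<Sum>l<N. \<Phi> k l) \<le> real N * real N * B"
  proof -
    have "cmod (\<Sum>k<N. \<Sum>l<N. \<Phi> k l) \<le> (\<Sum>k<N. cmod (\<Sum>l<N. \<Phi> k l))" by (rule norm_sum)
    also have "\<dots> \<le> (\<Sum>k<N. \<Sum>l<N. cmod (\<Phi> k l))" by (intro sum_mono norm_sum)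
    also have "\<dots> \<le> (\<Sum>k<N. \<Sum>l<N. B)" by (intro sum_mono bP)
    finally show ?thesis by simp
  qed
  have s2: "cmod (\<Sum>l<N. g N l - g 0 l) \<le> real N * (2 * G)"
  proof -
    have "cmod (\<Sum>l<N. g N l - g 0 l) \<le> (\<Sum>l<N. cmod (g N l - g 0 l))" by (rule norm_sum)
    also have "\<dots> \<le> (\<Sum>l<N. 2 * G)"
    proof (intro sum_mono)
      fix l have "cmod (g N l - g 0 l) \<le> cmod (g N l) + cmod (g 0 l)" by (rule norm_triangle_ineq4)
      then show "cmod (g N l - g 0 l) \<le> 2 * G" using bg[of N l] bg[of 0 l] by simp
    qed
    finally show ?thesis by simp
  qed
  have s3: "cmod (\<Sum>k<N. h k N - h k 0) \<le> real N * (2 * H)"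
  proof -
    have "cmod (\<Sum>k<N. h k N - h k 0) \<le> (\<Sum>k<N. cmod (h k N - h k 0))" by (rule norm_sum)
    also have "\<dots> \<le> (\<Sum>k<N. 2 * H)"
    proof (intro sum_mono)
      fix k have "cmod (h k N - h k 0) \<le> cmod (h k N) + cmod (h k 0)" by (rule norm_triangle_ineq4)
      then show "cmod (h k N - h k 0) \<le> 2 * H" using bh[of k N] bh[of k 0] by simp
    qed
    finally show ?thesis by simp
  qed
  have "of_nat (N * N) * c0 = (\<Sum>k<N. \<Sum>l<N. \<Phi> k l) - \<alpha> * (\<Sum>l<N. g N l - g 0 l)
           - \<beta> * (\<Sum>k<N. h k N - h k 0)" using tel by simp
  then have "real N * real N * cmod c0 = cmod ((\<Sum>k<N. \<Sum>l<N. \<Phi> k l) - \<alpha> * (\<Sum>l<N. g N l - g 0 l)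
           - \<beta> * (\<Sum>k<N. h k N - h k 0))"
    by (metis norm_mult norm_of_nat of_nat_mult)
  also have "\<dots> \<le> cmod (\<Sum>k<N. \<Sum>l<N. \<Phi> k l) + cmod \<alpha> * cmod (\<Sum>l<N. g N l - g 0 l)
           + cmod \<beta> * cmod (\<Sum>k<N. h k N - h k 0)"
  proof -
    have t: "cmod (a - b - c) \<le> cmod a + cmod b + cmod c" for a b c :: complex
      by (metis add_mono_thms_linordered_semiring(3) norm_triangle_ineq4 order_trans)
    show ?thesis by (rule order_trans[OF t]) (simp add: norm_mult)
  qed
  also have "\<dots> \<le> real N * real N * B + cmod \<alpha> * (real N * (2 * G)) + cmod \<beta> * (real N * (2 * H))"
    by (intro add_mono s1 mult_left_mono s2 s3) auto
  also have "\<dots> = real N * real N * B + real N * (2 * cmod \<alpha> * G + 2 * cmod \<beta> * H)"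
    by (simp add: algebra_simps)
  finally show "real N * real N * cmod c0 \<le> real N * real N * B + real N * (2 * cmod \<alpha> * G + 2 * cmod \<beta> * H)" .
qed

definition grid :: "('a::complex_vector \<Rightarrow> 'a) \<Rightarrow> real \<Rightarrow> ('a \<Rightarrow> 'a) \<Rightarrow> real \<Rightarrow> nat \<Rightarrow> nat \<Rightarrow> 'a \<Rightarrow> 'a" where
  "grid X sx Z sz k l = (Wop X sx ^^ k) \<circ> (Wop Z sz ^^ l)"

lemma grid_facts:
  fixes X Z :: "'a::complex_vector \<Rightarrow> 'a"
  assumes L: "subsp L" and cl: "clin X" "clin Z"
    and bX: "bij (Lop X (\<i> * complex_of_real sx))" and bZ: "bij (Lop Z (\<i> * complex_of_real sz))"
    and mX: "maps L X" and mZ: "maps L Z"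
    and mKX: "maps L (Kinv X (\<i> * complex_of_real sx))"
    and mKZ: "maps L (Kinv Z (\<i> * complex_of_real sz))"
    and cXZ: "comm_on L X Z"
  shows "maps L (grid X sx Z sz k l)"
    and "z \<in> L \<Longrightarrow> Lop X c (grid X sx Z sz k l z) = grid X sx Z sz k l (Lop X c z)"
    and "z \<in> L \<Longrightarrow> Lop Z c (grid X sx Z sz k l z) = grid X sx Z sz k l (Lop Z c z)"
    and "z \<in> L \<Longrightarrow> Wop Z sz (grid X sx Z sz k l z) = grid X sx Z sz k (Suc l) z"
    and "Wop X sx (grid X sx Z sz k l z) = grid X sx Z sz (Suc k) l z"
proof -
  have tX: "comm_on L X X" and tZ: "comm_on L Z Z" by (simp_all add: comm_on_def)
  note XX = fam_comm[OF L cl(1) cl(1) bX bX mX mX mKX mKX tX]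
  note XZ = fam_comm[OF L cl(1) cl(2) bX bZ mX mZ mKX mKZ cXZ]
  note ZX = fam_comm[OF L cl(2) cl(1) bZ bX mZ mX mKZ mKX comm_sym[OF cXZ]]
  note ZZ = fam_comm[OF L cl(2) cl(2) bZ bZ mZ mZ mKZ mKZ tZ]
  have mWX: "maps L (Wop X sx)" by (rule XX(3))
  have mWZ: "maps L (Wop Z sz)" by (rule ZZ(3))
  show "maps L (grid X sx Z sz k l)" unfolding grid_def
    by (intro maps_comp maps_pow mWX mWZ)
  show "Lop X c (grid X sx Z sz k l z) = grid X sx Z sz k l (Lop X c z)" if "z \<in> L"
  proof -
    have "comm_on L (Lop X c) (grid X sx Z sz k l)" unfolding grid_def
      by (intro comm_comp comm_pow XX(1) XZ(1) mWX mWZ maps_pow)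
    then show ?thesis using that by (simp add: comm_on_def)
  qed
  show "Lop Z c (grid X sx Z sz k l z) = grid X sx Z sz k l (Lop Z c z)" if "z \<in> L"
  proof -
    have "comm_on L (Lop Z c) (grid X sx Z sz k l)" unfolding grid_def
      by (intro comm_comp comm_pow ZX(1) ZZ(1) mWX mWZ maps_pow)
    then show ?thesis using that by (simp add: comm_on_def)
  qed
  show "Wop Z sz (grid X sx Z sz k l z) = grid X sx Z sz k (Suc l) z" if "z \<in> L"
  proof -
    have c: "comm_on L (Wop Z sz) (Wop X sx ^^ k)"
      by (intro comm_pow comm_sym[OF XZ(2)] mWX)
    have "(Wop Z sz ^^ l) z \<in> L" using maps_pow[OF mWZ] that by (simp add: maps_def)
    then show ?thesis using c by (simp add: grid_def comm_on_def)
  qed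
  show "Wop X sx (grid X sx Z sz k l z) = grid X sx Z sz (Suc k) l z"
    by (simp add: grid_def)
qed

lemma grid_unitary:
  assumes "selfadj X" "selfadj Z"
    and bX: "bij (Lop X (\<i> * complex_of_real sx))" and bZ: "bij (Lop Z (\<i> * complex_of_real sz))"
  shows "cinner (grid X sx Z sz k l u) (grid X sx Z sz k l v) = cinner u v"
proof -
  have z: "cinner ((Wop Z sz ^^ l) u) ((Wop Z sz ^^ l) v) = cinner u v" for u v
    by (induction l) (simp_all add: Wop_cinner[OF assms(2) bZ])
  have "cinner ((Wop X sx ^^ k) u) ((Wop X sx ^^ k) v) = cinner u v" for u v
    by (induction k) (simp_all add: Wop_cinner[OF assms(1) bX])
  then show ?thesis by (simp add: grid_def z)
qed

lemma grid_norm: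
  assumes "selfadj X" "selfadj Z"
    and bX: "bij (Lop X (\<i> * complex_of_real sx))" and bZ: "bij (Lop Z (\<i> * complex_of_real sz))"
  shows "norm (grid X sx Z sz k l u) = norm u"
  using grid_unitary[OF assms, of k l u u] by (simp add: norm_eq_sqrt_cinner)

lemma grid_intertw:
  assumes C: "clin C" and iX: "\<And>z. X1 (C z) = C (X2 z)" and iZ: "\<And>z. Z1 (C z) = C (Z2 z)"
    and b: "bij (Lop X1 (\<i> * complex_of_real sx))" "bij (Lop X2 (\<i> * complex_of_real sx))"
      "bij (Lop Z1 (\<i> * complex_of_real sz))" "bij (Lop Z2 (\<i> * complex_of_real sz))"
  shows "C (grid X2 sx Z2 sz k l z) = grid X1 sx Z1 sz k l (C z)"
proof -
  have wx: "Wop X1 sx (C z) = C (Wop X2 sx z)" for z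
    by (rule intertw_Wop[of C X1 X2, OF C iX b(1,2)])
  have wz: "Wop Z1 sz (C z) = C (Wop Z2 sz z)" for z
    by (rule intertw_Wop[of C Z1 Z2, OF C iZ b(3,4)])
  have pz: "(Wop Z1 sz ^^ l) (C z) = C ((Wop Z2 sz ^^ l) z)" for z
    by (induction l) (simp_all add: wz)
  have px: "(Wop X1 sx ^^ k) (C z) = C ((Wop X2 sx ^^ k) z)" for z
    by (induction k) (simp_all add: wx)
  show ?thesis by (simp add: grid_def px pz)
qed

lemma E_identity:
  assumes Y: "clin Y"
  shows "cinner (Y (Lop X' (\<i> * complex_of_real (- s)) p)) (Lop X (\<i> * complex_of_real (- s)) q)
       - cinner (Y (Lop X' (\<i> * complex_of_real s) p)) (Lop X (\<i> * complex_of_real s) q)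
       = 2 * \<i> * complex_of_real s * (cinner (Y p) (X q) - cinner (Y (X' p)) q)"
  unfolding Lop_def clin_diff[OF Y] clin_scaleC[OF Y]
    cinner_diff_left cinner_diff_right cinner_scaleC_left cinner_scaleC_right
  by (simp add: algebra_simps)

lemma core:
  fixes S S' T T' Y C :: "'a::complex_hilbert \<Rightarrow> 'a"
  assumes cl: "clin S" "clin S'" "clin T" "clin T'" "clin C" and Yb: "bounded_clinear Y"
    and adjS: "\<And>x y. cinner (S x) y = cinner x (S' y)"
    and sa: "selfadj (ReP S S')" "selfadj (ReP T T')" "selfadj (ImP S S')" "selfadj (ImP T T')"
    and bAS: "bij (Lop (ReP S S') (\<i> * complex_of_real sa))"
    and bAT: "bij (Lop (ReP T T') (\<i> * complex_of_real sa))"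
    and bBS: "bij (Lop (ImP S S') (\<i> * complex_of_real sb))"
    and bBT: "bij (Lop (ImP T T') (\<i> * complex_of_real sb))"
    and s0: "sa \<noteq> 0" "sb \<noteq> 0"
    and intA: "\<And>z. ReP S S' (C z) = C (ReP T T' z)"
    and intB: "\<And>z. ImP S S' (C z) = C (ImP T T' z)"
    and M: "subsp M" "m \<in> M" "maps M (ReP T T')" "maps M (ImP T T')"
      "maps M (Kinv (ReP T T') (\<i> * complex_of_real sa))" "maps M (Kinv (ImP T T') (\<i> * complex_of_real sb))"
      "comm_on M (ReP T T') (ImP T T')"
    and N: "subsp N" "n \<in> N" "maps N (ReP S S')" "maps N (ImP S S')"
      "maps N (Kinv (ReP S S') (\<i> * complex_of_real sa))" "maps N (Kinv (ImP S S') (\<i> * complex_of_real sb))"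
      "comm_on N (ReP S S') (ImP S S')"
    and Dn: "\<And>z. norm (S (Y z) - Y (T z) + C z) \<le> nD * norm z"
  shows "cmod (cinner (C m) n) \<le> nD * norm m * norm n"
proof -
  define AS where "AS = ReP S S'"
  define BS where "BS = ImP S S'"
  define AT where "AT = ReP T T'"
  define BT where "BT = ImP T T'"
  define ca where "ca = \<i> * complex_of_real sa"
  define cb where "cb = \<i> * complex_of_real sb"
  define P where "P = grid AT sa BT sb"
  define Q where "Q = grid AS sa BS sb"
  have clAS: "clin AS" unfolding AS_def ReP_def by (intro clin_lc cl)
  have clBS: "clin BS" unfolding BS_def ImP_def by (intro clin_lc cl)
  have clAT: "clin AT" unfolding AT_def ReP_def by (intro clin_lc cl)
  have clBT: "clin BT" unfolding BT_def ImP_def by (intro clin_lc cl)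
  have clY: "clin Y" by (rule bcl_clin[OF Yb])
  obtain KY where KY: "KY \<ge> 0" "\<And>x. norm (Y x) \<le> norm x * KY" using bcl_bound[OF Yb] by blast
  note GP = grid_facts[OF M(1) clAT[unfolded AT_def] clBT[unfolded BT_def] bAT bBT M(3) M(4) M(5) M(6) M(7)]
  note GQ = grid_facts[OF N(1) clAS[unfolded AS_def] clBS[unfolded BS_def] bAS bBS N(3) N(4) N(5) N(6) N(7)]
  have mM: "Lop AT c m \<in> M" "Lop BT c m \<in> M" for c
    using maps_Lop[OF M(1) M(3)] maps_Lop[OF M(1) M(4)] M(2)
    by (auto simp: maps_def AT_def BT_def)
  have nN: "Lop AS c n \<in> N" "Lop BS c n \<in> N" for c
    using maps_Lop[OF N(1) N(3)] maps_Lop[OF N(1) N(4)] N(2)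
    by (auto simp: maps_def AS_def BS_def)
  define ma where "ma = Lop AT ca m"
  define na where "na = Lop AS ca n"
  define mb where "mb = Lop BT cb m"
  define nb where "nb = Lop BS cb n"
  define g where "g = (\<lambda>k l. cinner (Y (P k l ma)) (Q k l na))"
  define h where "h = (\<lambda>k l. cinner (Y (P k l mb)) (Q k l nb))"
  define \<Phi> where "\<Phi> = (\<lambda>k l. cinner (S (Y (P k l m)) - Y (T (P k l m)) + C (P k l m)) (Q k l n))"
  define c0 where "c0 = cinner (C m) n"
  have Pn: "norm (P k l z) = norm z" for k l z
    unfolding P_def AT_def BT_def by (rule grid_norm[OF sa(2) sa(4) bAT bBT])
  have Qn: "norm (Q k l z) = norm z" for k l z
    unfolding Q_def AS_def BS_def by (rule grid_norm[OF sa(1) sa(3) bAS bBS])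
  have Qi: "cinner (Q k l u) (Q k l v) = cinner u v" for k l u v
    unfolding Q_def AS_def BS_def by (rule grid_unitary[OF sa(1) sa(3) bAS bBS])
  have CP: "C (P k l z) = Q k l (C z)" for k l z
    unfolding P_def Q_def AS_def BS_def AT_def BT_def
    by (rule grid_intertw[OF cl(5) intA intB bAS bAT bBS bBT])
  have eq: "\<Phi> k l = c0 + (1 / (2 * \<i> * complex_of_real sa)) * (g (Suc k) l - g k l)
                      + (\<i> / (2 * \<i> * complex_of_real sb)) * (h k (Suc l) - h k l)" for k l
  proof -
    define p where "p = P k l m"
    define q where "q = Q k l n"
    have EA: "cinner (Y p) (AS q) - cinner (Y (AT p)) q = (g (Suc k) l - g k l) / (2 * \<i> * complex_of_real sa)"
    proof -
      have p1: "Lop AT ca p = P k l ma"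
        unfolding p_def ma_def P_def AT_def BT_def ca_def by (rule GP(2)[OF M(2)])
      have p2: "Lop AT (\<i> * complex_of_real (- sa)) p = P (Suc k) l ma"
      proof -
        have "Lop AT (\<i> * complex_of_real (- sa)) p = Wop AT sa (Lop AT ca p)"
          unfolding ca_def AT_def by (rule Wop_Lop[OF bAT, symmetric])
        also have "\<dots> = P (Suc k) l ma" using GP(5) p1 by (simp add: P_def AT_def BT_def)
        finally show ?thesis .
      qed
      have q1: "Lop AS ca q = Q k l na"
        unfolding q_def na_def Q_def AS_def BS_def ca_def by (rule GQ(2)[OF N(2)])
      have q2: "Lop AS (\<i> * complex_of_real (- sa)) q = Q (Suc k) l na"
      proof -
        have "Lop AS (\<i> * complex_of_real (- sa)) q = Wop AS sa (Lop AS ca q)"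
          unfolding ca_def AS_def by (rule Wop_Lop[OF bAS, symmetric])
        also have "\<dots> = Q (Suc k) l na" using GQ(5) q1 by (simp add: Q_def AS_def BS_def)
        finally show ?thesis .
      qed
      have "g (Suc k) l - g k l = 2 * \<i> * complex_of_real sa * (cinner (Y p) (AS q) - cinner (Y (AT p)) q)"
        using E_identity[OF clY, of AT sa p AS q] unfolding g_def p2 q2 p1[unfolded ca_def] q1[unfolded ca_def]
        by simp
      then show ?thesis using s0 by (simp add: field_simps)
    qed
    have EB: "cinner (Y p) (BS q) - cinner (Y (BT p)) q = (h k (Suc l) - h k l) / (2 * \<i> * complex_of_real sb)"
    proof -
      have p1: "Lop BT cb p = P k l mb"
        unfolding p_def mb_def P_def AT_def BT_def cb_def by (rule GP(3)[OF M(2)])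
      have p2: "Lop BT (\<i> * complex_of_real (- sb)) p = P k (Suc l) mb"
      proof -
        have "Lop BT (\<i> * complex_of_real (- sb)) p = Wop BT sb (Lop BT cb p)"
          unfolding cb_def BT_def by (rule Wop_Lop[OF bBT, symmetric])
        also have "\<dots> = P k (Suc l) mb"
          using GP(4)[of mb k l] mM(2)[of cb] p1 by (simp add: P_def AT_def BT_def mb_def)
        finally show ?thesis .
      qed
      have q1: "Lop BS cb q = Q k l nb"
        unfolding q_def nb_def Q_def AS_def BS_def cb_def by (rule GQ(3)[OF N(2)])
      have q2: "Lop BS (\<i> * complex_of_real (- sb)) q = Q k (Suc l) nb"
      proof -
        have "Lop BS (\<i> * complex_of_real (- sb)) q = Wop BS sb (Lop BS cb q)"
          unfolding cb_def BS_def by (rule Wop_Lop[OF bBS, symmetric])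
        also have "\<dots> = Q k (Suc l) nb"
          using GQ(4)[of nb k l] nN(2)[of cb] q1 by (simp add: Q_def AS_def BS_def nb_def)
        finally show ?thesis .
      qed
      have "h k (Suc l) - h k l = 2 * \<i> * complex_of_real sb * (cinner (Y p) (BS q) - cinner (Y (BT p)) q)"
        using E_identity[OF clY, of BT sb p BS q] unfolding h_def p2 q2 p1[unfolded cb_def] q1[unfolded cb_def]
        by simp
      then show ?thesis using s0 by (simp add: field_simps)
    qed
    have Cpq: "cinner (C p) q = c0"
      by (simp add: p_def q_def CP Qi c0_def)
    have Sq: "S' q = AS q + (- \<i>) *\<^sub>C BS q" unfolding AS_def BS_def by (rule R'_decomp)
    have Tp: "T p = AT p + \<i> *\<^sub>C BT p" unfolding AT_def BT_def by (rule R_decomp)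
    have "\<Phi> k l = cinner (S (Y p)) q - cinner (Y (T p)) q + cinner (C p) q"
      by (simp add: \<Phi>_def p_def q_def cinner_add_left cinner_diff_left)
    also have "cinner (S (Y p)) q = cinner (Y p) (AS q) + \<i> * cinner (Y p) (BS q)"
      by (simp add: adjS Sq cinner_add_right cinner_scaleC_right)
    also have "cinner (Y (T p)) q = cinner (Y (AT p)) q + \<i> * cinner (Y (BT p)) q"
      by (simp add: Tp clin_add[OF clY] clin_scaleC[OF clY] cinner_add_left cinner_scaleC_left)
    finally have "\<Phi> k l = (cinner (Y p) (AS q) - cinner (Y (AT p)) q)
        + \<i> * (cinner (Y p) (BS q) - cinner (Y (BT p)) q) + c0"
      by (simp add: Cpq algebra_simps)
    then show ?thesis unfolding EA EB by (simp add: add_ac)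
  qed
  have bP: "cmod (\<Phi> k l) \<le> nD * norm m * norm n" for k l
  proof -
    have "cmod (\<Phi> k l) \<le> norm (S (Y (P k l m)) - Y (T (P k l m)) + C (P k l m)) * norm (Q k l n)"
      unfolding \<Phi>_def by (rule cs)
    also have "\<dots> \<le> nD * norm (P k l m) * norm (Q k l n)"
      using Dn by (intro mult_right_mono) auto
    finally show ?thesis by (simp add: Pn Qn)
  qed
  have bg: "cmod (g k l) \<le> norm ma * KY * norm na" for k l
  proof -
    have "cmod (g k l) \<le> norm (Y (P k l ma)) * norm (Q k l na)" unfolding g_def by (rule cs)
    also have "\<dots> \<le> norm (P k l ma) * KY * norm (Q k l na)" using KY by (intro mult_right_mono) auto
    finally show ?thesis by (simp add: Pn Qn)
  qed
  have bh: "cmod (h k l) \<le> norm mb * KY * norm nb" for k l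
  proof -
    have "cmod (h k l) \<le> norm (Y (P k l mb)) * norm (Q k l nb)" unfolding h_def by (rule cs)
    also have "\<dots> \<le> norm (P k l mb) * KY * norm (Q k l nb)" using KY by (intro mult_right_mono) auto
    finally show ?thesis by (simp add: Pn Qn)
  qed
  have "cmod c0 \<le> nD * norm m * norm n"
    by (rule avg_bound[of \<Phi> c0 "1 / (2 * \<i> * complex_of_real sa)" g "\<i> / (2 * \<i> * complex_of_real sb)" h,
        OF eq bP bg bh])
  then show ?thesis by (simp add: c0_def)
qed

lemma bcl_comp: assumes "bounded_clinear F" "bounded_clinear G" shows "bounded_clinear (F \<circ> G)"
proof -
  obtain K1 where K1: "K1 \<ge> 0" "\<And>x. norm (F x) \<le> norm x * K1" using bcl_bound[OF assms(1)] by blast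
  obtain K2 where K2: "K2 \<ge> 0" "\<And>x. norm (G x) \<le> norm x * K2" using bcl_bound[OF assms(2)] by blast
  have "norm (F (G x)) \<le> norm x * (K2 * K1)" for x
  proof -
    have "norm (F (G x)) \<le> norm (G x) * K1" by (rule K1(2))
    also have "\<dots> \<le> norm x * K2 * K1" using K1 K2 by (intro mult_right_mono) auto
    finally show ?thesis by (simp add: mult.assoc)
  qed
  then show ?thesis using assms unfolding bounded_clinear_def by auto
qed

lemma range_subsp: "clin F \<Longrightarrow> subsp (range F)"
  unfolding subsp_def
  by (auto simp: clin_diff[symmetric] clin_scaleC[symmetric])

lemma bound_sum: assumes "bounded_clinear A" "bounded_clinear B"
  obtains K where "K \<ge> 0" "\<And>x. norm (A x) \<le> norm x * K" "\<And>x. norm (B x) \<le> norm x * K"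
proof -
  obtain K1 where K1: "K1 \<ge> 0" "\<And>x. norm (A x) \<le> norm x * K1" using bcl_bound[OF assms(1)] by blast
  obtain K2 where K2: "K2 \<ge> 0" "\<And>x. norm (B x) \<le> norm x * K2" using bcl_bound[OF assms(2)] by blast
  have "norm (A x) \<le> norm x * (K1 + K2)" for x
  proof -
    have "norm x * K1 \<le> norm x * (K1 + K2)" using K2(1) by (intro mult_left_mono) auto
    then show ?thesis using K1(2)[of x] by linarith
  qed
  moreover have "norm (B x) \<le> norm x * (K1 + K2)" for x
  proof -
    have "norm x * K2 \<le> norm x * (K1 + K2)" using K1(1) by (intro mult_left_mono) auto
    then show ?thesis using K2(2)[of x] by linarith
  qed
  ultimately show ?thesis using that[of "K1 + K2"] K1 K2 by auto
qed

theorem mainTheorem12: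
  fixes S T X C :: "'a::complex_hilbert \<Rightarrow> 'a"
  assumes "separable_H TYPE('a)"
    and "bounded_clinear S" and "bounded_clinear T" and "bounded_clinear X"
    and "bounded_clinear C"
    and "FP_BH S T"
    and "gen_deriv S T C = (\<lambda>x. 0)"
  shows "onorm (\<lambda>x. gen_deriv S T X x + C x) \<ge> onorm C"
proof -
  note bS = assms(2) and bT = assms(3) and bX = assms(4) and bC = assms(5)
  define S' where "S' = adj S"
  define T' where "T' = adj T"
  define C' where "C' = adj C"
  have bS': "bounded_clinear S'" unfolding S'_def by (rule adj_bcl[OF bS])
  have bT': "bounded_clinear T'" unfolding T'_def by (rule adj_bcl[OF bT])
  have bC': "bounded_clinear C'" unfolding C'_def by (rule adj_bcl[OF bC])
  have aS: "cinner (S x) y = cinner x (S' y)" for x y unfolding S'_def by (rule adj_prop[OF bS])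
  have aS2: "cinner (S' x) y = cinner x (S y)" for x y unfolding S'_def by (rule adj_prop2[OF bS])
  have aT: "cinner (T x) y = cinner x (T' y)" for x y unfolding T'_def by (rule adj_prop[OF bT])
  have aT2: "cinner (T' x) y = cinner x (T y)" for x y unfolding T'_def by (rule adj_prop2[OF bT])
  have aC: "cinner (C x) y = cinner x (C' y)" for x y unfolding C'_def by (rule adj_prop[OF bC])
  have aC2: "cinner (C' x) y = cinner x (C y)" for x y unfolding C'_def by (rule adj_prop2[OF bC])
  have r1: "S (C x) = C (T x)" for x
    using fun_cong[OF assms(7), of x] by (simp add: gen_deriv_def)
  have fp: "S \<circ> K = K \<circ> T \<Longrightarrow> bounded_clinear K \<Longrightarrow> S' \<circ> K = K \<circ> T'" for K
    using assms(6) unfolding FP_BH_def S'_def T'_def by blast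
  have r2: "S' (C x) = C (T' x)" for x
    using fp[of C] bC r1 by (auto simp: fun_eq_iff)
  have r2b: "S' (C (T x)) = C (T (T' x))" for x
  proof -
    have "S \<circ> (C \<circ> T) = (C \<circ> T) \<circ> T" by (simp add: fun_eq_iff r1)
    then have "S' \<circ> (C \<circ> T) = (C \<circ> T) \<circ> T'" using fp bcl_comp[OF bC bT] by blast
    then show ?thesis by (simp add: fun_eq_iff)
  qed
  have star: "C (T (T' x)) = C (T' (T x))" for x using r2b r2 by metis
  have r3: "T (C' y) = C' (S y)" for y
  proof (rule cinner_ext_right)
    fix w
    have "cinner (T (C' y)) w = cinner (C' y) (T' w)" by (rule aT)
    also have "\<dots> = cinner y (C (T' w))" by (rule aC2)
    also have "\<dots> = cinner y (S' (C w))" by (simp only: r2)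
    also have "\<dots> = cinner (S y) (C w)" by (rule aS[symmetric])
    also have "\<dots> = cinner (C' (S y)) w" by (rule aC2[symmetric])
    finally show "cinner (T (C' y)) w = cinner (C' (S y)) w" .
  qed
  have r4: "T' (C' y) = C' (S' y)" for y
  proof (rule cinner_ext_right)
    fix w
    have "cinner (T' (C' y)) w = cinner (C' y) (T w)" by (rule aT2)
    also have "\<dots> = cinner y (C (T w))" by (rule aC2)
    also have "\<dots> = cinner y (S (C w))" by (simp only: r1)
    also have "\<dots> = cinner (S' y) (C w)" by (rule aS2[symmetric])
    also have "\<dots> = cinner (C' (S' y)) w" by (rule aC2[symmetric])
    finally show "cinner (T' (C' y)) w = cinner (C' (S' y)) w" .
  qed
  have commM: "comm_on (range C') T T'"
  proof -
    have "C' (S (S' y)) = C' (S' (S y))" for y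
    proof (rule cinner_ext_right)
      fix w
      have "cinner (C' (S (S' y))) w = cinner y (C (T (T' w)))"
        by (simp add: aC2 aS aS2 r2 r1)
      moreover have "cinner (C' (S' (S y))) w = cinner y (C (T' (T w)))"
        by (simp add: aC2 aS aS2 r2 r1)
      ultimately show "cinner (C' (S (S' y))) w = cinner (C' (S' (S y))) w" by (simp add: star)
    qed
    then show ?thesis by (auto simp: comm_on_def r3 r4)
  qed
  have commN: "comm_on (range C) S S'"
    by (auto simp: comm_on_def r1 r2 star)
  define AS where "AS = ReP S S'"
  define BS where "BS = ImP S S'"
  define AT where "AT = ReP T T'"
  define BT where "BT = ImP T T'"
  have bAS: "bounded_clinear AS" unfolding AS_def ReP_def by (intro bcl_lc bS bS')
  have bBS: "bounded_clinear BS" unfolding BS_def ImP_def by (intro bcl_lc bS bS')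
  have bAT: "bounded_clinear AT" unfolding AT_def ReP_def by (intro bcl_lc bT bT')
  have bBT: "bounded_clinear BT" unfolding BT_def ImP_def by (intro bcl_lc bT bT')
  have saAS: "selfadj AS" unfolding AS_def ReP_def by (rule selfadj_lc[OF aS]) simp
  have saBS: "selfadj BS" unfolding BS_def ImP_def by (rule selfadj_lc[OF aS]) simp
  have saAT: "selfadj AT" unfolding AT_def ReP_def by (rule selfadj_lc[OF aT]) simp
  have saBT: "selfadj BT" unfolding BT_def ImP_def by (rule selfadj_lc[OF aT]) simp
  have clC: "clin C" and clC': "clin C'" by (rule bcl_clin[OF bC], rule bcl_clin[OF bC'])
  have intA: "AS (C z) = C (AT z)" for z
    unfolding AS_def AT_def ReP_def by (rule lc_intertw[of C S T S' T', OF clC r1 r2])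
  have intB: "BS (C z) = C (BT z)" for z
    unfolding BS_def BT_def ImP_def by (rule lc_intertw[of C S T S' T', OF clC r1 r2])
  have intA': "AT (C' z) = C' (AS z)" for z
    unfolding AS_def AT_def ReP_def by (rule lc_intertw[of C' T S T' S', OF clC' r3 r4])
  have intB': "BT (C' z) = C' (BS z)" for z
    unfolding BS_def BT_def ImP_def by (rule lc_intertw[of C' T S T' S', OF clC' r3 r4])
  obtain KA where KA: "KA \<ge> 0" "\<And>x. norm (AS x) \<le> norm x * KA" "\<And>x. norm (AT x) \<le> norm x * KA"
    using bound_sum[OF bAS bAT] by blast
  obtain KB where KB: "KB \<ge> 0" "\<And>x. norm (BS x) \<le> norm x * KB" "\<And>x. norm (BT x) \<le> norm x * KB"
    using bound_sum[OF bBS bBT] by blast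
  define sa where "sa = KA + 1"
  define sb where "sb = KB + 1"
  have sa: "KA < \<bar>sa\<bar>" "sa \<noteq> 0" using KA(1) by (auto simp: sa_def)
  have sb: "KB < \<bar>sb\<bar>" "sb \<noteq> 0" using KB(1) by (auto simp: sb_def)
  have bijAS: "bij (Lop AS (\<i> * complex_of_real sa))" by (rule Lop_bij[OF bAS saAS KA(1) KA(2) sa(1)])
  have bijAT: "bij (Lop AT (\<i> * complex_of_real sa))" by (rule Lop_bij[OF bAT saAT KA(1) KA(3) sa(1)])
  have bijBS: "bij (Lop BS (\<i> * complex_of_real sb))" by (rule Lop_bij[OF bBS saBS KB(1) KB(2) sb(1)])
  have bijBT: "bij (Lop BT (\<i> * complex_of_real sb))" by (rule Lop_bij[OF bBT saBT KB(1) KB(3) sb(1)])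
  have clAS: "clin AS" "clin BS" "clin AT" "clin BT" using bAS bBS bAT bBT by (simp_all add: bcl_clin)
  have kM: "maps (range C') (Kinv AT (\<i> * complex_of_real sa))" "maps (range C') (Kinv BT (\<i> * complex_of_real sb))"
    using intertw_Kinv[of C' AT AS, OF clC' intA' bijAT bijAS]
      intertw_Kinv[of C' BT BS, OF clC' intB' bijBT bijBS]
    by (auto simp: maps_def)
  have kN: "maps (range C) (Kinv AS (\<i> * complex_of_real sa))" "maps (range C) (Kinv BS (\<i> * complex_of_real sb))"
    using intertw_Kinv[of C AS AT, OF clC intA bijAS bijAT]
      intertw_Kinv[of C BS BT, OF clC intB bijBS bijBT]
    by (auto simp: maps_def)
  have mM: "maps (range C') AT" "maps (range C') BT" using intA' intB' by (auto simp: maps_def)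
  have mN: "maps (range C) AS" "maps (range C) BS" using intA intB by (auto simp: maps_def)
  have cM: "comm_on (range C') AT BT" unfolding AT_def BT_def
    by (rule comm_ReP_ImP[OF bcl_clin[OF bT] bcl_clin[OF bT'] commM])
  have cN: "comm_on (range C) AS BS" unfolding AS_def BS_def
    by (rule comm_ReP_ImP[OF bcl_clin[OF bS] bcl_clin[OF bS'] commN])
  define D where "D = (\<lambda>x. gen_deriv S T X x + C x)"
  have Deq: "D = (\<lambda>x. S (X x) - X (T x) + C x)" by (simp add: D_def gen_deriv_def)
  have blD: "bounded_linear D" unfolding Deq
    using bcl_bounded_linear[OF bS] bcl_bounded_linear[OF bT] bcl_bounded_linear[OF bX]
      bcl_bounded_linear[OF bC]
    by (intro bounded_linear_add bounded_linear_sub bounded_linear_compose[of S X]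
        bounded_linear_compose[of X T]) auto
  define nD where "nD = onorm D"
  have nD0: "nD \<ge> 0" unfolding nD_def by (rule onorm_pos_le[OF blD])
  have Dn: "norm (S (X z) - X (T z) + C z) \<le> nD * norm z" for z
    using onorm[OF blD, of z] by (simp add: Deq nD_def)
  have key: "cmod (cinner (C m) n) \<le> nD * norm m * norm n" if "m \<in> range C'" "n \<in> range C" for m n
    by (rule core[OF bcl_clin[OF bS] bcl_clin[OF bS'] bcl_clin[OF bT] bcl_clin[OF bT'] clC bX aS
          saAS[unfolded AS_def] saAT[unfolded AT_def] saBS[unfolded BS_def] saBT[unfolded BT_def]
          bijAS[unfolded AS_def] bijAT[unfolded AT_def] bijBS[unfolded BS_def] bijBT[unfolded BT_def]
          sa(2) sb(2) intA[unfolded AS_def AT_def] intB[unfolded BS_def BT_def]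
          range_subsp[OF clC'] that(1) mM[unfolded AT_def BT_def] kM[unfolded AT_def BT_def]
          cM[unfolded AT_def BT_def]
          range_subsp[OF clC] that(2) mN[unfolded AS_def BS_def] kN[unfolded AS_def BS_def]
          cN[unfolded AS_def BS_def] Dn])
  have Cbound: "norm (C y) \<le> nD * norm y" for y
  proof -
    define u where "u = C' (C y)"
    have "cmod (cinner (C u) (C y)) \<le> nD * norm u * norm (C y)"
      by (rule key) (auto simp: u_def)
    moreover have "cinner (C u) (C y) = complex_of_real ((norm u)^2)"
      by (simp add: aC u_def cinner_self_real)
    ultimately have 1: "(norm u)^2 \<le> nD * norm u * norm (C y)" by (simp add: norm_power)
    have 2: "norm u \<le> nD * norm (C y)"
    proof (cases "norm u = 0")
      case True then show ?thesis using nD0 by simp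
    next
      case False
      then have "norm u * norm u \<le> norm u * (nD * norm (C y))"
        using 1 by (simp add: power2_eq_square algebra_simps)
      then show ?thesis using False by simp
    qed
    have "(norm (C y))^2 = Re (cinner (C y) (C y))" by (rule norm_sq_Re)
    also have "cinner (C y) (C y) = cinner y u" by (simp add: aC u_def)
    also have "Re (cinner y u) \<le> norm y * norm u" by (rule real_cs)
    also have "\<dots> \<le> norm y * (nD * norm (C y))" using 2 by (simp add: mult_left_mono)
    finally have 3: "norm (C y) * norm (C y) \<le> norm (C y) * (nD * norm y)"
      by (simp add: power2_eq_square algebra_simps)
    show ?thesis
    proof (cases "norm (C y) = 0")
      case True then show ?thesis using nD0 by simp
    next
      case False then show ?thesis using 3 by simp
    qed
  qed
  have "onorm C \<le> nD" by (rule onorm_bound[OF nD0]) (simp add: Cbound)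
  then show ?thesis by (simp add: nD_def D_def)
qed


end
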